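(* Let $m\ge2$, $n\ge1$ and $\mathcal{A}=(a_{i_1i_2\cdots i_m})\in\mathbb{R}_+^{[m,n]}$ with $r_i(\mathcal{A})\neq0$ for all $i\in[n]$. Then \[\min_{i\in[n]}\frac{r_i(\mathcal{A}^2)}{(r_i(\mathcal{A}))^{m-1}}\le\rho(\mathcal{A})\le\max_{i\in[n]}\frac{r_i(\mathcal{A}^2)}{(r_i(\mathcal{A}))^{m-1}}.\]
   Context: $[n]=\{1,\ldots,n\}$. $\mathbb{R}_+^{[m,n]}$ denotes the set of order $m$, dimension $n$ tensors $\mathcal{A}=(a_{i_1\cdots i_m})$, $i_j\in[n]$, with nonnegative real entries. For a tensor $\mathcal{T}=(t_{i_1\cdots i_p})$ of order $p$ and dimension $n$, $r_i(\mathcal{T})=\sum_{i_2,\ldots,i_p=1}^n|t_{ii_2\cdots i_p}|$. $\mathcal{A}^2=\mathcal{A}\mathcal{A}$ is the general product: for $\mathcal{A}$ of order $m$ and $\mathcal{B}$ of order $k$, $\mathcal{A}\mathcal{B}=(c_{i\alpha_1\cdots\alpha_{m-1}})$ is the order $(m-1)(k-1)+1$, dimension $n$ tensor with $c_{i\alpha_1\cdots\alpha_{m-1}}=\sum_{i_2,\ldots,i_m=1}^n a_{ii_2\cdots i_m}b_{i_2\alpha_1}\cdots b_{i_m\alpha_{m-1}}$, $i\in[n]$, $\alpha_j\in[n]^{k-1}$ (where $b_{j\alpha}$ with $\alpha=(j_2,\ldots,j_k)$ means $b_{jj_2\cdots j_k}$). Eigenvalues: $\lambda\in\mathbb{C}$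 is an eigenvalue of $\mathcal{A}$ if there is a nonzero $x\in\mathbb{C}^n$ with $\sum_{i_2,\ldots,i_m=1}^n a_{ii_2\cdots i_m}x_{i_2}\cdots x_{i_m}=\lambda x_i^{m-1}$ for all $i\in[n]$; $\rho(\mathcal{A})$ is the maximum modulus of the eigenvalues of $\mathcal{A}$. *)

theory Defs
  imports Complex_Main
begin

text \<open>Tensors of order p and dimension n are functions T :: nat list \<Rightarrow> 'a,
  whose meaningful entries are T xs for index lists xs of length p with entries
  in {0..<n} (0-based indexing, [n] = {0..<n}).\<close>

definition idxs :: "nat \<Rightarrow> nat \<Rightarrow> nat list set" where
  "idxs p n = {xs. length xs = p \<and> set xs \<subseteq> {..<n}}"

definition rsum :: "nat \<Rightarrow> nat \<Rightarrow> (nat list \<Rightarrow> real) \<Rightarrow> nat \<Rightarrow> real" where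
  "rsum p n T i = (\<Sum>js\<in>idxs (p - 1) n. \<bar>T (i # js)\<bar>)"

text \<open>General product AB, A of order m, B of order k, dimension n; the result has
  order (m-1)(k-1)+1 and index i # alpha_1 @ ... @ alpha_(m-1), each alpha_j of length k-1.\<close>
definition tprod :: "nat \<Rightarrow> nat \<Rightarrow> nat \<Rightarrow> (nat list \<Rightarrow> real) \<Rightarrow> (nat list \<Rightarrow> real) \<Rightarrow> (nat list \<Rightarrow> real)" where
  "tprod m k n A B = (\<lambda>idx.
     \<Sum>is\<in>idxs (m - 1) n. A (hd idx # is) *
        (\<Prod>j<m - 1. B ((is ! j) # take (k - 1) (drop (j * (k - 1)) (tl idx)))))"

definition tensor_eigenvalue :: "nat \<Rightarrow> nat \<Rightarrow> (nat list \<Rightarrow> real) \<Rightarrow> complex \<Rightarrow> bool" where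
  "tensor_eigenvalue m n A lam \<longleftrightarrow>
     (\<exists>x :: nat \<Rightarrow> complex. (\<exists>i<n. x i \<noteq> 0) \<and>
        (\<forall>i<n. (\<Sum>is\<in>idxs (m - 1) n. complex_of_real (A (i # is)) * (\<Prod>j<m - 1. x (is ! j)))
               = lam * x i ^ (m - 1)))"

definition spectral_radius :: "nat \<Rightarrow> nat \<Rightarrow> (nat list \<Rightarrow> real) \<Rightarrow> real" where
  "spectral_radius m n A = Sup (cmod ` {lam. tensor_eigenvalue m n A lam})"

end

theory Submission
  imports Defs "HOL-Analysis.Analysis"
begin


lemma finite_idxs[simp]: "finite (idxs p n)"
proof -
  have "idxs p n = {xs. set xs \<subseteq> {..<n} \<and> length xs = p}" by (auto simp: idxs_def)
  then show ?thesis using finite_lists_length_eq[of "{..<n}" p] by simp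
qed

lemma idxs_nth: "is \<in> idxs p n \<Longrightarrow> j < p \<Longrightarrow> is ! j < n"
  unfolding idxs_def using nth_mem by fastforce

lemma idxs_append_bij:
  "bij_betw (\<lambda>(ys,zs). ys @ zs) (idxs a n \<times> idxs b n) (idxs (a+b) n)"
proof (rule bij_betwI[where g="\<lambda>xs. (take a xs, drop a xs)"])
  show "(\<lambda>(ys, zs). ys @ zs) \<in> idxs a n \<times> idxs b n \<rightarrow> idxs (a + b) n"
    by (auto simp: idxs_def)
  show "(\<lambda>xs. (take a xs, drop a xs)) \<in> idxs (a + b) n \<rightarrow> idxs a n \<times> idxs b n"
    by (auto simp: idxs_def dest: in_set_takeD in_set_dropD)
qed (auto simp: idxs_def)

lemma sum_idxs_append:
  "(\<Sum>xs\<in>idxs (a+b) n. f xs) = (\<Sum>ys\<in>idxs a n. \<Sum>zs\<in>idxs b n. f (ys @ zs))"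
proof -
  have "(\<Sum>xs\<in>idxs (a+b) n. f xs) = (\<Sum>yz\<in>idxs a n \<times> idxs b n. f ((\<lambda>(ys,zs). ys @ zs) yz))"
    using sum.reindex_bij_betw[OF idxs_append_bij, of f a n b] by simp
  also have "\<dots> = (\<Sum>ys\<in>idxs a n. \<Sum>zs\<in>idxs b n. f (ys @ zs))"
    by (simp add: sum.cartesian_product prod.case_distrib)
  finally show ?thesis .
qed

lemma sum_prod_blocks:
  fixes g :: "nat \<Rightarrow> nat list \<Rightarrow> 'a::comm_semiring_1"
  shows "(\<Sum>js\<in>idxs (p*q) n. \<Prod>j<q. g j (take p (drop (j*p) js))) = (\<Prod>j<q. \<Sum>a\<in>idxs p n. g j a)"
proof (induction q)
  case 0
  have "idxs 0 n = {[]}" by (auto simp: idxs_def)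
  then show ?case by simp
next
  case (Suc q)
  have eq: "(\<Prod>j<Suc q. g j (take p (drop (j*p) (ys @ zs)))) =
       (\<Prod>j<q. g j (take p (drop (j*p) ys))) * g q zs"
    if "ys \<in> idxs (p*q) n" "zs \<in> idxs p n" for ys zs
  proof -
    have ly: "length ys = p*q" and lz: "length zs = p" using that by (auto simp: idxs_def)
    have A: "take p (drop (j*p) (ys @ zs)) = take p (drop (j*p) ys)" if "j < q" for j
    proof -
      have "j*p + p \<le> p*q" using that
        by (metis add.commute mult.commute mult_Suc_right mult_le_mono2 Suc_leI)
      then show ?thesis using ly by (simp add: take_append)
    qed
    have B: "take p (drop (q*p) (ys @ zs)) = zs" using ly lz by (simp add: mult.commute)
    have C: "(\<Prod>j<q. g j (take p (drop (j*p) (ys @ zs)))) = (\<Prod>j<q. g j (take p (drop (j*p) ys)))"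
      by (intro prod.cong refl) (metis A lessThan_iff)
    show ?thesis unfolding prod.lessThan_Suc C B ..
  qed
  have "(\<Sum>js\<in>idxs (p*Suc q) n. \<Prod>j<Suc q. g j (take p (drop (j*p) js)))
     = (\<Sum>ys\<in>idxs (p*q) n. \<Sum>zs\<in>idxs p n. \<Prod>j<Suc q. g j (take p (drop (j*p) (ys @ zs))))"
    unfolding mult_Suc_right add.commute[of p "p*q"] by (rule sum_idxs_append)
  also have "\<dots> = (\<Sum>ys\<in>idxs (p*q) n. \<Sum>zs\<in>idxs p n. (\<Prod>j<q. g j (take p (drop (j*p) ys))) * g q zs)"
    by (intro sum.cong refl, rule eq, assumption+)
  also have "\<dots> = (\<Sum>ys\<in>idxs (p*q) n. (\<Prod>j<q. g j (take p (drop (j*p) ys)))) * (\<Sum>zs\<in>idxs p n. g q zs)"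
    by (simp add: sum_distrib_left sum_distrib_right sum.swap[of _ "idxs p n"])
  also have "\<dots> = (\<Prod>j<Suc q. \<Sum>a\<in>idxs p n. g j a)" using Suc by simp
  finally show ?case .
qed

lemma idxs_1: "idxs 1 n = (\<lambda>i. [i]) ` {..<n}"
  by (auto simp: idxs_def length_Suc_conv)

lemma sum_prod_power:
  fixes f :: "nat \<Rightarrow> 'a::comm_semiring_1"
  shows "(\<Sum>is\<in>idxs q n. \<Prod>j<q. f (is ! j)) = (\<Sum>i<n. f i) ^ q"
proof -
  have "(\<Sum>is\<in>idxs q n. \<Prod>j<q. f (is ! j)) = (\<Sum>js\<in>idxs (1*q) n. \<Prod>j<q. (\<lambda>j a. f (hd a)) j (take 1 (drop (j*1) js)))"
    by (intro sum.cong refl prod.cong) (auto simp: idxs_def hd_drop_conv_nth take_Suc)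
  also have "\<dots> = (\<Prod>j<q. \<Sum>a\<in>idxs 1 n. f (hd a))" by (rule sum_prod_blocks)
  also have "(\<Sum>a\<in>idxs 1 n. f (hd a)) = (\<Sum>i<n. f i)"
    unfolding idxs_1 by (subst sum.reindex) (auto simp: inj_on_def)
  finally show ?thesis by simp
qed



lemma bw_real:
  fixes s :: "nat \<Rightarrow> real"
  assumes "\<And>k. \<bar>s k\<bar> \<le> M"
  shows "\<exists>r l. strict_mono r \<and> (\<lambda>k. s (r k)) \<longlonglongrightarrow> l"
proof -
  obtain r where r: "strict_mono r" "monoseq (\<lambda>k. s (r k))" using seq_monosub by blast
  have "Bseq (\<lambda>k. s (r k))" using assms by (intro BseqI'[of _ M]) auto
  then have "convergent (\<lambda>k. s (r k))" using r(2) Bseq_monoseq_convergent by blast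
  then show ?thesis using r(1) by (auto simp: convergent_def)
qed

lemma bw_nat:
  fixes X :: "nat \<Rightarrow> nat \<Rightarrow> real"
  assumes "\<And>k i. i < N \<Longrightarrow> \<bar>X k i\<bar> \<le> M"
  shows "\<exists>r x. strict_mono r \<and> (\<forall>i<N. (\<lambda>k. X (r k) i) \<longlonglongrightarrow> x i)"
  using assms
proof (induction N)
  case 0
  show ?case by (rule exI[of _ id]) (auto simp: strict_mono_def)
next
  case (Suc N)
  then obtain r x where r: "strict_mono r" "\<forall>i<N. (\<lambda>k. X (r k) i) \<longlonglongrightarrow> x i" by force
  obtain r' l where r': "strict_mono r'" "(\<lambda>k. X (r (r' k)) N) \<longlonglongrightarrow> l"
    using bw_real[of "\<lambda>k. X (r k) N" M] Suc.prems by auto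
  have "\<forall>i<Suc N. (\<lambda>k. X (r (r' k)) i) \<longlonglongrightarrow> (x(N := l)) i"
  proof (intro allI impI)
    fix i assume "i < Suc N"
    show "(\<lambda>k. X (r (r' k)) i) \<longlonglongrightarrow> (x(N := l)) i"
    proof (cases "i = N")
      case True then show ?thesis using r' by simp
    next
      case False
      then have "i < N" using \<open>i < Suc N\<close> by simp
      then have "((\<lambda>k. X (r k) i) \<circ> r') \<longlonglongrightarrow> x i" using r r' LIMSEQ_subseq_LIMSEQ by blast
      then show ?thesis using False by (simp add: o_def)
    qed
  qed
  moreover have "strict_mono (r \<circ> r')" using r r' strict_mono_o by blast
  ultimately show ?case by (intro exI[of _ "r \<circ> r'"] exI[of _ "x(N := l)"]) (simp add: o_def)
qed

definition cube :: "nat \<Rightarrow> (nat \<Rightarrow> real) set" where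
  "cube n = {x. \<forall>i<n. 0 \<le> x i \<and> x i \<le> 1}"

definition d1 :: "nat \<Rightarrow> (nat \<Rightarrow> real) \<Rightarrow> (nat \<Rightarrow> real) \<Rightarrow> real" where
  "d1 n x y = (\<Sum>i<n. \<bar>x i - y i\<bar>)"

definition seqcont :: "nat \<Rightarrow> ((nat \<Rightarrow> real) \<Rightarrow> (nat \<Rightarrow> real)) \<Rightarrow> bool" where
  "seqcont n f \<longleftrightarrow> (\<forall>X x. (\<forall>k. X k \<in> cube n) \<longrightarrow> x \<in> cube n \<longrightarrow>
      (\<forall>i<n. (\<lambda>k. X k i) \<longlonglongrightarrow> x i) \<longrightarrow> (\<forall>i<n. (\<lambda>k. f (X k) i) \<longlonglongrightarrow> f x i))"

lemma seqcontD:
  "seqcont n f \<Longrightarrow> (\<And>k. X k \<in> cube n) \<Longrightarrow> x \<in> cube n \<Longrightarrow> \<forall>i<n. (\<lambda>k. X k i) \<longlonglongrightarrow> x i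
   \<Longrightarrow> i < n \<Longrightarrow> (\<lambda>k. f (X k) i) \<longlonglongrightarrow> f x i"
  unfolding seqcont_def by blast

lemma cube_limit:
  assumes "\<And>k. X k \<in> cube n" "\<forall>i<n. (\<lambda>k. X k i) \<longlonglongrightarrow> x i"
  shows "x \<in> cube n"
  unfolding cube_def
proof (intro CollectI allI impI conjI)
  fix i assume i: "i < n"
  show "0 \<le> x i"
    using i assms by (intro LIMSEQ_le_const[of "\<lambda>k. X k i"]) (auto simp: cube_def)
  show "x i \<le> 1"
    using i assms by (intro LIMSEQ_le_const2[of "\<lambda>k. X k i"]) (auto simp: cube_def)
qed

lemma d1_tendsto:
  assumes "\<forall>i<n. (\<lambda>k. X k i) \<longlonglongrightarrow> x i" "\<forall>i<n. (\<lambda>k. Y k i) \<longlonglongrightarrow> y i"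
  shows "(\<lambda>k. d1 n (X k) (Y k)) \<longlonglongrightarrow> d1 n x y"
  unfolding d1_def using assms by (intro tendsto_intros) auto

lemma d1_nonneg: "0 \<le> d1 n x y" unfolding d1_def by (simp add: sum_nonneg)

lemma d1_comp: "i < n \<Longrightarrow> \<bar>x i - y i\<bar> \<le> d1 n x y"
  unfolding d1_def by (rule member_le_sum) auto

lemma d1_sym: "d1 n x y = d1 n y x" unfolding d1_def by (simp add: abs_minus_commute)

lemma d1_triangle: "d1 n x z \<le> d1 n x y + d1 n y z"
  unfolding d1_def sum.distrib[symmetric] by (rule sum_mono) linarith

lemma uniform_cont:
  assumes "seqcont n f" "e > 0"
  shows "\<exists>d>0. \<forall>x\<in>cube n. \<forall>y\<in>cube n. d1 n x y < d \<longrightarrow> d1 n (f x) (f y) < e"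
proof (rule ccontr)
  assume neg: "\<not> ?thesis"
  have neg': "\<forall>d>0. \<exists>x\<in>cube n. \<exists>y\<in>cube n. d1 n x y < d \<and> e \<le> d1 n (f x) (f y)"
    using neg by (metis not_less)
  have "\<forall>k. \<exists>x y. x \<in> cube n \<and> y \<in> cube n \<and> d1 n x y < 1 / (real k + 1) \<and> e \<le> d1 n (f x) (f y)"
  proof
    fix k
    have "1 / (real k + 1) > 0" by simp
    from neg'[rule_format, OF this] show "\<exists>x y. x \<in> cube n \<and> y \<in> cube n \<and> d1 n x y < 1 / (real k + 1) \<and> e \<le> d1 n (f x) (f y)"
      by blast
  qed
  then obtain X Y where XY: "\<And>k. X k \<in> cube n" "\<And>k. Y k \<in> cube n"
    "\<And>k. d1 n (X k) (Y k) < 1 / (real k + 1)" "\<And>k. e \<le> d1 n (f (X k)) (f (Y k))"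
    by metis
  obtain r x where r: "strict_mono r" "\<forall>i<n. (\<lambda>k. X (r k) i) \<longlonglongrightarrow> x i"
    using bw_nat[of n X 1] XY(1) by (fastforce simp: cube_def)
  have xc: "x \<in> cube n" using cube_limit[of "\<lambda>k. X (r k)" n x] XY(1) r(2) by blast
  have ry: "\<forall>i<n. (\<lambda>k. Y (r k) i) \<longlonglongrightarrow> x i"
  proof (intro allI impI)
    fix i assume i: "i < n"
    have z: "(\<lambda>k. 1 / (real (r k) + 1)) \<longlonglongrightarrow> 0"
    proof -
      have "(\<lambda>k. 1 / (real k + 1)) \<longlonglongrightarrow> (0::real)" by (rule LIMSEQ_inverse_real_of_nat_add[where r=0, simplified, unfolded inverse_eq_divide add.commute[of 1]]) 
      then show ?thesis using LIMSEQ_subseq_LIMSEQ[OF _ r(1)] by (simp add: o_def)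
    qed
    have "(\<lambda>k. Y (r k) i - X (r k) i) \<longlonglongrightarrow> 0"
    proof (rule tendsto_sandwich[of "\<lambda>k. - (1 / (real (r k) + 1))" _ _ "\<lambda>k. 1 / (real (r k) + 1)"])
      have "\<bar>Y (r k) i - X (r k) i\<bar> < 1 / (real (r k) + 1)" for k
        using d1_comp[OF i, of "Y (r k)" "X (r k)"] XY(3)[of "r k"] d1_sym[of n] by fastforce
      then show "\<forall>\<^sub>F k in sequentially. - (1 / (real (r k) + 1)) \<le> Y (r k) i - X (r k) i"
        "\<forall>\<^sub>F k in sequentially. Y (r k) i - X (r k) i \<le> 1 / (real (r k) + 1)"
        by (auto intro!: always_eventually less_imp_le simp: abs_less_iff) (smt (verit))
      show "(\<lambda>k. - (1 / (real (r k) + 1))) \<longlonglongrightarrow> 0" using tendsto_minus[OF z] by simp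
      show "(\<lambda>k. 1 / (real (r k) + 1)) \<longlonglongrightarrow> 0" by (rule z)
    qed
    then have "(\<lambda>k. (Y (r k) i - X (r k) i) + X (r k) i) \<longlonglongrightarrow> 0 + x i"
      using r(2) i by (intro tendsto_add) auto
    then show "(\<lambda>k. Y (r k) i) \<longlonglongrightarrow> x i" by simp
  qed
  have fx: "\<forall>i<n. (\<lambda>k. f (X (r k)) i) \<longlonglongrightarrow> f x i"
    using seqcontD[OF assms(1), of "\<lambda>k. X (r k)", OF XY(1) xc r(2)] by blast
  have fy: "\<forall>i<n. (\<lambda>k. f (Y (r k)) i) \<longlonglongrightarrow> f x i"
    using seqcontD[OF assms(1), of "\<lambda>k. Y (r k)", OF XY(2) xc ry] by blast
  have "(\<lambda>k. d1 n (f (X (r k))) (f (Y (r k)))) \<longlonglongrightarrow> d1 n (f x) (f x)"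
    using d1_tendsto[OF fx fy] .
  moreover have "d1 n (f x) (f x) = 0" by (simp add: d1_def)
  ultimately have "e \<le> 0" using XY(4) by (intro LIMSEQ_le_const[of "\<lambda>k. d1 n (f (X (r k))) (f (Y (r k)))"]) auto
  then show False using assms(2) by simp
qed



lemma approx_fix:
  assumes sc: "seqcont n f" and into: "\<And>x. x \<in> cube n \<Longrightarrow> f x \<in> cube n" and dpos: "\<delta> > 0" and npos: "n > 0"
  shows "\<exists>z\<in>cube n. d1 n (f z) z < \<delta>"
proof (rule ccontr)
  assume "\<not> ?thesis"
  then have big: "\<And>z. z \<in> cube n \<Longrightarrow> \<delta> \<le> d1 n (f z) z" by (meson not_less)
  define label :: "(nat \<Rightarrow> real) \<Rightarrow> nat \<Rightarrow> nat" where
    "label x i = (if x i = 0 then 0 else if x i = 1 then 1 else if x i \<le> f x i then 0 else 1)" for x i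
  have lab0: "x i \<le> f x i" if "x \<in> cube n" "i < n" "label x i = 0" for x i
    using that into[OF that(1)] by (auto simp: label_def cube_def split: if_splits)
  have lab1: "f x i \<le> x i" if "x \<in> cube n" "i < n" "label x i = 1" for x i
    using that into[OF that(1)] by (auto simp: label_def cube_def split: if_splits)
  have lab01: "label x i = 0 \<or> label x i = 1" for x i by (auto simp: label_def)
  have lem1: "\<bar>f x i - x i\<bar> \<le> \<bar>f y i - f x i\<bar> + \<bar>y i - x i\<bar>"
    if "x \<in> cube n" "y \<in> cube n" "i < n" "label x i \<noteq> label y i" for x y i
  proof (cases "label x i = 0")
    case True
    then have "label y i = 1" using that lab01 by metis
    then have "f y i \<le> y i" using lab1 that by blast
    moreover have "x i \<le> f x i" using lab0 that True by blast
    ultimately show ?thesis by linarith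
  next
    case False
    then have "label x i = 1" "label y i = 0" using that lab01 by metis+
    then have "y i \<le> f y i" "f x i \<le> x i" using lab0 lab1 that by blast+
    then show ?thesis by linarith
  qed
  define \<eta> where "\<eta> = \<delta> / (4 * real n)"
  have etapos: "\<eta> > 0" using dpos npos by (simp add: \<eta>_def)
  obtain e where e: "e > 0" "\<And>x y. x \<in> cube n \<Longrightarrow> y \<in> cube n \<Longrightarrow> d1 n x y < e \<Longrightarrow> d1 n (f x) (f y) < \<eta>"
    using uniform_cont[OF sc etapos] by blast
  define m where "m = min e \<eta>"
  have mpos: "m > 0" using e etapos by (simp add: m_def)
  obtain p :: nat where p: "2 * real n / m < real p" using reals_Archimedean2 by blast
  have ppos: "p > 0" using p mpos npos
    by (metis divide_pos_pos mult_pos_pos of_nat_0_less_iff order_less_trans zero_less_numeral)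
  have pm: "2 * real n / real p < m" using p mpos ppos npos by (simp add: field_simps)
  define P :: "(nat \<Rightarrow> nat) \<Rightarrow> nat \<Rightarrow> real" where "P q = (\<lambda>j. real (q j) / real p)" for q
  have Pc: "P q \<in> cube n" if "\<forall>i<n. q i \<le> p" for q
    using that ppos by (auto simp: P_def cube_def divide_le_eq_1)
  have q1: "\<forall>x. (\<forall>i<n. x i \<le> p) \<longrightarrow> (\<forall>i<n. label (P x) i = (0::nat) \<or> label (P x) i = 1)"
    using lab01 by blast
  have q2: "\<forall>x. (\<forall>i<n. x i \<le> p) \<longrightarrow> (\<forall>i<n. x i = 0 \<longrightarrow> label (P x) i = 0)"
    by (auto simp: label_def P_def)
  have q3: "\<forall>x. (\<forall>i<n. x i \<le> p) \<longrightarrow> (\<forall>i<n. x i = p \<longrightarrow> label (P x) i = 1)"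
    using ppos by (auto simp: label_def P_def)
  obtain q where q: "\<forall>i<n. q i < p"
    "\<forall>i<n. \<exists>r s. (\<forall>j<n. q j \<le> r j \<and> r j \<le> q j + 1) \<and> (\<forall>j<n. q j \<le> s j \<and> s j \<le> q j + 1) \<and> label (P r) i \<noteq> label (P s) i"
    using kuhn_lemma[of p n "\<lambda>x i. label (P x) i", OF ppos q1 q2 q3] by blast
  define z where "z = P q"
  have zc: "z \<in> cube n" unfolding z_def using q(1) by (intro Pc) (auto intro: less_imp_le)
  have close: "d1 n (P r) z \<le> real n / real p" if "\<forall>j<n. q j \<le> r j \<and> r j \<le> q j + 1" for r
  proof -
    have "d1 n (P r) z = (\<Sum>j<n. \<bar>real (r j) - real (q j)\<bar> / real p)"
      unfolding d1_def z_def P_def by (intro sum.cong refl) (simp add: diff_divide_distrib[symmetric])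
    also have "\<dots> \<le> (\<Sum>j<n. 1 / real p)"
      using that ppos by (intro sum_mono divide_right_mono) auto
    finally show ?thesis by simp
  qed
  have rc: "P r \<in> cube n" if "\<forall>j<n. q j \<le> r j \<and> r j \<le> q j + 1" for r
    using that q(1) by (intro Pc) (metis Suc_eq_plus1 Suc_leI order_trans)
  have "real n / real p \<le> 2 * real n / real p" using ppos by (simp add: divide_right_mono)
  then have np: "real n / real p < m" using pm by linarith
  have coord: "\<bar>f z i - z i\<bar> < 4 * \<eta>" if i: "i < n" for i
  proof -
    obtain r s where rs: "\<forall>j<n. q j \<le> r j \<and> r j \<le> q j + 1" "\<forall>j<n. q j \<le> s j \<and> s j \<le> q j + 1"
      "label (P r) i \<noteq> label (P s) i"
      using q(2) i by blast
    define r' where "r' = P r"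
    define s' where "s' = P s"
    have r'c: "r' \<in> cube n" and s'c: "s' \<in> cube n" using rc rs by (auto simp: r'_def s'_def)
    have dr: "d1 n r' z < m" using close[OF rs(1)] np by (simp add: r'_def)
    have ds: "d1 n s' z < m" using close[OF rs(2)] np by (simp add: s'_def)
    have dsr2: "d1 n s' r' \<le> 2 * real n / real p"
      using d1_triangle[of n s' r' z] d1_sym[of n z r'] close[OF rs(1)] close[OF rs(2)]
      by (simp add: r'_def s'_def)
    have dsr3: "d1 n s' r' < m" using dsr2 pm by linarith
    have e1: "d1 n (f z) (f r') < \<eta>"
      using e(2)[OF zc r'c] dr d1_sym[of n z r'] by (simp add: m_def)
    have e2: "d1 n (f s') (f r') < \<eta>"
      using e(2)[OF s'c r'c] dsr3 by (simp add: m_def)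
    have e3: "d1 n s' r' < \<eta>" using dsr3 by (simp add: m_def)
    have e4: "d1 n r' z < \<eta>" using dr by (simp add: m_def)
    have l: "\<bar>f r' i - r' i\<bar> \<le> \<bar>f s' i - f r' i\<bar> + \<bar>s' i - r' i\<bar>"
      using lem1[OF r'c s'c i] rs(3) by (simp add: r'_def s'_def)
    have "\<bar>f z i - z i\<bar> \<le> \<bar>f z i - f r' i\<bar> + \<bar>f r' i - r' i\<bar> + \<bar>r' i - z i\<bar>" by linarith
    also have "\<dots> \<le> d1 n (f z) (f r') + (d1 n (f s') (f r') + d1 n s' r') + d1 n r' z"
      using l d1_comp[OF i, of "f z" "f r'"] d1_comp[OF i, of "f s'" "f r'"] d1_comp[OF i, of s' r']
        d1_comp[OF i, of r' z] by linarith
    also have "\<dots> < 4 * \<eta>" using e1 e2 e3 e4 by linarith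
    finally show ?thesis .
  qed
  have "d1 n (f z) z < (\<Sum>i<n. 4 * \<eta>)"
    unfolding d1_def using npos coord by (intro sum_strict_mono) auto
  also have "\<dots> = \<delta>" using npos by (simp add: \<eta>_def)
  finally show False using big[OF zc] by simp
qed

lemma brouwer_nat:
  assumes sc: "seqcont n f" and into: "\<And>x. x \<in> cube n \<Longrightarrow> f x \<in> cube n" and npos: "n > 0"
  shows "\<exists>z\<in>cube n. \<forall>i<n. f z i = z i"
proof -
  have "\<forall>k. \<exists>z. z \<in> cube n \<and> d1 n (f z) z < 1 / (real k + 1)"
  proof
    fix k
    have "1 / (real k + 1) > 0" by simp
    then show "\<exists>z. z \<in> cube n \<and> d1 n (f z) z < 1 / (real k + 1)"
      using approx_fix[OF sc into _ npos] by blast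
  qed
  then obtain Z where Z: "\<And>k. Z k \<in> cube n" "\<And>k. d1 n (f (Z k)) (Z k) < 1 / (real k + 1)" by metis
  obtain r z where r: "strict_mono r" "\<forall>i<n. (\<lambda>k. Z (r k) i) \<longlonglongrightarrow> z i"
    using bw_nat[of n Z 1] Z(1) by (fastforce simp: cube_def)
  have zc: "z \<in> cube n" using cube_limit[of "\<lambda>k. Z (r k)" n z] Z(1) r(2) by blast
  have fz: "\<forall>i<n. (\<lambda>k. f (Z (r k)) i) \<longlonglongrightarrow> f z i"
    using seqcontD[OF sc, of "\<lambda>k. Z (r k)", OF Z(1) zc r(2)] by blast
  have lim: "(\<lambda>k. d1 n (f (Z (r k))) (Z (r k))) \<longlonglongrightarrow> d1 n (f z) z" using d1_tendsto[OF fz r(2)] .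
  have z0: "(\<lambda>k. 1 / (real (r k) + 1)) \<longlonglongrightarrow> 0"
  proof -
    have "(\<lambda>k. 1 / (real k + 1)) \<longlonglongrightarrow> (0::real)" by (rule LIMSEQ_inverse_real_of_nat_add[where r=0, simplified, unfolded inverse_eq_divide add.commute[of 1]])
    then show ?thesis using LIMSEQ_subseq_LIMSEQ[OF _ r(1)] by (simp add: o_def)
  qed
  have "d1 n (f z) z \<le> 0"
    using Z(2) by (intro tendsto_le[OF _ z0 lim]) (auto intro!: always_eventually less_imp_le)
  then have "d1 n (f z) z = 0" using d1_nonneg[of n] by (simp add: order_antisym)
  then have "\<forall>i<n. f z i = z i"
    unfolding d1_def by (subst (asm) sum_nonneg_eq_0_iff) auto
  then show ?thesis using zc by blast
qed



definition T :: "nat \<Rightarrow> nat \<Rightarrow> (nat list \<Rightarrow> real) \<Rightarrow> (nat \<Rightarrow> real) \<Rightarrow> nat \<Rightarrow> real" where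
  "T p n B x i = (\<Sum>is\<in>idxs p n. B (i # is) * (\<Prod>j<p. x (is ! j)))"

lemma T_tendsto:
  assumes "\<forall>i<n. (\<lambda>k. X k i) \<longlonglongrightarrow> x i"
  shows "(\<lambda>k. T p n B (X k) i) \<longlonglongrightarrow> T p n B x i"
  unfolding T_def
proof (intro tendsto_sum tendsto_mult tendsto_const tendsto_prod)
  fix "is" j assume "is \<in> idxs p n" "j \<in> {..<p}"
  then have "is ! j < n" using idxs_nth by blast
  then show "(\<lambda>k. X k (is ! j)) \<longlonglongrightarrow> x (is ! j)" using assms by blast
qed

lemma T_cong: "(\<And>i. i < n \<Longrightarrow> x i = x' i) \<Longrightarrow> T p n B x i = T p n B x' i"
  unfolding T_def by (intro sum.cong refl arg_cong2[where f="(*)"] prod.cong) (auto dest: idxs_nth)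

lemma T_nonneg:
  assumes "\<forall>is\<in>idxs p n. 0 \<le> B (i # is)" "\<And>j. j < n \<Longrightarrow> 0 \<le> x j"
  shows "0 \<le> T p n B x i"
  unfolding T_def using assms by (intro sum_nonneg mult_nonneg_nonneg prod_nonneg) (auto dest: idxs_nth)

lemma T_lower:
  assumes "\<forall>is\<in>idxs p n. 0 \<le> B (i # is)" "\<And>j. j < n \<Longrightarrow> a \<le> x j" "0 \<le> a"
  shows "(\<Sum>is\<in>idxs p n. B (i # is)) * a ^ p \<le> T p n B x i"
  unfolding T_def sum_distrib_right
proof (rule sum_mono)
  fix "is" assume is_: "is \<in> idxs p n"
  have "(\<Prod>j<p. a) \<le> (\<Prod>j<p. x (is ! j))"
    using assms is_ by (intro prod_mono) (auto dest: idxs_nth)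
  then show "B (i # is) * a ^ p \<le> B (i # is) * (\<Prod>j<p. x (is ! j))"
    using assms(1) is_ by (intro mult_left_mono) auto
qed

lemma T_upper:
  assumes "\<forall>is\<in>idxs p n. 0 \<le> B (i # is)" "\<And>j. j < n \<Longrightarrow> 0 \<le> x j" "\<And>j. j < n \<Longrightarrow> x j \<le> 1"
  shows "T p n B x i \<le> (\<Sum>is\<in>idxs p n. B (i # is))"
  unfolding T_def
proof (rule sum_mono)
  fix "is" assume is_: "is \<in> idxs p n"
  have "(\<Prod>j<p. x (is ! j)) \<le> (\<Prod>j<p. 1)"
    using assms is_ by (intro prod_mono) (auto dest: idxs_nth)
  then show "B (i # is) * (\<Prod>j<p. x (is ! j)) \<le> B (i # is)"
    using assms(1) is_ mult_left_mono[of _ 1 "B (i # is)"] by auto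
qed

lemma ex_min_idx: "(n::nat) > 0 \<Longrightarrow> \<exists>k<n. \<forall>i<n. (f::nat \<Rightarrow> real) k \<le> f i"
proof -
  assume "n > 0"
  then have "Min (f ` {..<n}) \<in> f ` {..<n}" by (intro Min_in) auto
  then obtain k where "k < n" "f k = Min (f ` {..<n})" by auto
  then show ?thesis by (metis Min_le finite_imageI finite_lessThan image_eqI lessThan_iff)
qed

lemma ex_max_idx: "(n::nat) > 0 \<Longrightarrow> \<exists>k<n. \<forall>i<n. f i \<le> (f::nat \<Rightarrow> real) k"
proof -
  assume "n > 0"
  then have "Max (f ` {..<n}) \<in> f ` {..<n}" by (intro Max_in) auto
  then obtain k where "k < n" "f k = Max (f ` {..<n})" by auto
  then show ?thesis by (metis Max_ge finite_imageI finite_lessThan image_eqI lessThan_iff)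
qed



lemma eigen_pert:
  assumes p: "p \<ge> 1" and npos: "n > 0"
    and Bnn: "\<And>i. i < n \<Longrightarrow> \<forall>is\<in>idxs p n. 0 \<le> B (i # is)"
    and rows: "\<And>i. i < n \<Longrightarrow> c \<le> (\<Sum>is\<in>idxs p n. B (i # is))"
    and eps: "\<epsilon> > 0"
  shows "\<exists>lam z. c \<le> lam \<and> lam \<le> ((\<Sum>i<n. \<Sum>is\<in>idxs p n. B (i # is)) + \<epsilon>) * real n ^ p \<and>
     z \<in> cube n \<and> (\<Sum>i<n. z i) = 1 \<and> (\<forall>i<n. T p n B z i + \<epsilon> = lam * z i ^ p)"
proof -
  define yt :: "(nat \<Rightarrow> real) \<Rightarrow> nat \<Rightarrow> real" where
    "yt z = (\<lambda>i. z i + max 0 (1 - (\<Sum>j<n. z j)))" for z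
  define w where "w z i = T p n B (yt z) i + \<epsilon> * (\<Sum>j<n. yt z j) ^ p" for z i
  define v where "v z i = root p (w z i)" for z i
  define S where "S z = (\<Sum>j<n. v z j)" for z
  define F where "F z = (\<lambda>i. v z i / S z)" for z
  have yt_nn: "0 \<le> yt z i" if "z \<in> cube n" "i < n" for z i
    using that by (auto simp: yt_def cube_def)
  have yt_sum: "1 \<le> (\<Sum>j<n. yt z j)" if "z \<in> cube n" for z
  proof -
    have "(\<Sum>j<n. yt z j) = (\<Sum>j<n. z j) + real n * max 0 (1 - (\<Sum>j<n. z j))"
      by (simp add: yt_def sum.distrib)
    moreover have "1 \<le> real n" using npos by simp
    moreover have "max 0 (1 - (\<Sum>j<n. z j)) \<le> real n * max 0 (1 - (\<Sum>j<n. z j))"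
      using \<open>1 \<le> real n\<close> mult_right_mono[of 1 "real n" "max 0 (1 - (\<Sum>j<n. z j))"] by simp
    ultimately show ?thesis by linarith
  qed
  have w_pos: "\<epsilon> \<le> w z i" if "z \<in> cube n" "i < n" for z i
  proof -
    have "0 \<le> T p n B (yt z) i" using Bnn[OF that(2)] yt_nn[OF that(1)] by (intro T_nonneg) auto
    moreover have "1 \<le> (\<Sum>j<n. yt z j) ^ p" using yt_sum[OF that(1)] by (simp add: one_le_power)
    moreover have "\<epsilon> * 1 \<le> \<epsilon> * (\<Sum>j<n. yt z j) ^ p"
      using \<open>1 \<le> (\<Sum>j<n. yt z j) ^ p\<close> eps by (intro mult_left_mono) auto
    ultimately show ?thesis unfolding w_def by linarith
  qed
  have v_pos: "0 < v z i" if "z \<in> cube n" "i < n" for z i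
    using w_pos[OF that] eps p by (simp add: v_def)
  have S_pos: "0 < S z" if "z \<in> cube n" for z
    unfolding S_def using npos v_pos[OF that] by (intro sum_pos) auto
  have v_le_S: "v z i \<le> S z" if "z \<in> cube n" "i < n" for z i
    unfolding S_def using that v_pos[OF that(1)] by (intro member_le_sum) (auto intro: less_imp_le)
  have into: "F z \<in> cube n" if "z \<in> cube n" for z
    using v_pos[OF that] v_le_S[OF that] S_pos[OF that]
    by (auto simp: cube_def F_def divide_le_eq_1 intro: less_imp_le)
  have sc: "seqcont n F"
    unfolding seqcont_def
  proof (intro allI impI)
    fix Z z i assume Zc: "\<forall>k. Z k \<in> cube n" and zc: "z \<in> cube n" and lim: "\<forall>i<n. (\<lambda>k. Z k i) \<longlonglongrightarrow> z i"
      and i: "i < n"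
    have ylim: "\<forall>i<n. (\<lambda>k. yt (Z k) i) \<longlonglongrightarrow> yt z i"
      using lim unfolding yt_def by (intro allI impI tendsto_intros) auto
    have wlim: "(\<lambda>k. w (Z k) j) \<longlonglongrightarrow> w z j" if "j < n" for j
      unfolding w_def using ylim by (intro tendsto_intros T_tendsto) auto
    have vlim: "(\<lambda>k. v (Z k) j) \<longlonglongrightarrow> v z j" if "j < n" for j
      unfolding v_def using wlim[OF that] by (intro tendsto_real_root)
    have Slim: "(\<lambda>k. S (Z k)) \<longlonglongrightarrow> S z"
      unfolding S_def using vlim by (intro tendsto_sum) auto
    show "(\<lambda>k. F (Z k) i) \<longlonglongrightarrow> F z i"
      unfolding F_def using vlim[OF i] Slim S_pos[OF zc] by (intro tendsto_divide) auto
  qed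
  obtain z where zc: "z \<in> cube n" and zfix: "\<forall>i<n. F z i = z i"
    using brouwer_nat[OF sc into npos] by blast
  have zsum: "(\<Sum>i<n. z i) = 1"
  proof -
    have "(\<Sum>i<n. z i) = (\<Sum>i<n. v z i / S z)" using zfix by (simp add: F_def)
    also have "\<dots> = 1" using S_pos[OF zc] by (simp add: S_def sum_divide_distrib[symmetric])
    finally show ?thesis .
  qed
  have ytz: "yt z = z" by (rule ext) (simp add: yt_def zsum)
  define lam where "lam = S z ^ p"
  have eq: "T p n B z i + \<epsilon> = lam * z i ^ p" if i: "i < n" for i
  proof -
    have "w z i = root p (w z i) ^ p" using w_pos[OF zc i] eps p by (simp add: real_root_pow_pos2)
    also have "root p (w z i) = S z * z i" using zfix i S_pos[OF zc] by (simp add: F_def v_def field_simps)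
    finally have "w z i = (S z * z i) ^ p" .
    moreover have "w z i = T p n B z i + \<epsilon>" by (simp add: w_def ytz zsum)
    ultimately show ?thesis by (simp add: lam_def power_mult_distrib)
  qed
  have zpos: "0 < z i" if "i < n" for i
    using zfix that v_pos[OF zc that] S_pos[OF zc] by (metis F_def divide_pos_pos)
  obtain k where k: "k < n" "\<forall>i<n. z k \<le> z i" using ex_min_idx[OF npos] by blast
  have "c * z k ^ p \<le> T p n B z k"
  proof -
    have "c * z k ^ p \<le> (\<Sum>is\<in>idxs p n. B (k # is)) * z k ^ p"
      using rows[OF k(1)] zpos[OF k(1)] by (intro mult_right_mono) auto
    also have "\<dots> \<le> T p n B z k" using Bnn[OF k(1)] k zpos[OF k(1)] by (intro T_lower) auto
    finally show ?thesis .
  qed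
  then have "c * z k ^ p \<le> lam * z k ^ p" using eq[OF k(1)] eps by linarith
  then have clam: "c \<le> lam" using zpos[OF k(1)] by (simp add: mult_le_cancel_right)
  obtain k' where k': "k' < n" "\<forall>i<n. z i \<le> z k'" using ex_max_idx[OF npos] by blast
  have "1 \<le> real n * z k'"
  proof -
    have "1 = (\<Sum>i<n. z i)" using zsum by simp
    also have "\<dots> \<le> (\<Sum>i<n. z k')" using k' by (intro sum_mono) auto
    finally show ?thesis by simp
  qed
  then have zk': "1 \<le> (real n * z k') ^ p" by (simp add: one_le_power)
  define R where "R = (\<Sum>i<n. \<Sum>is\<in>idxs p n. B (i # is))"
  have "T p n B z k' \<le> (\<Sum>is\<in>idxs p n. B (k' # is))"
    using Bnn[OF k'(1)] zc by (intro T_upper) (auto simp: cube_def)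
  also have "\<dots> \<le> R" unfolding R_def using k'(1) Bnn
    by (intro member_le_sum[where f="\<lambda>i. \<Sum>is\<in>idxs p n. B (i # is)"]) (auto intro: sum_nonneg)
  finally have "lam * z k' ^ p \<le> R + \<epsilon>" using eq[OF k'(1)] by linarith
  then have "lam * z k' ^ p * real n ^ p \<le> (R + \<epsilon>) * real n ^ p" by (simp add: mult_right_mono)
  moreover have "lam \<le> lam * z k' ^ p * real n ^ p"
  proof -
    have "0 \<le> lam" unfolding lam_def using S_pos[OF zc] by simp
    then have "lam * 1 \<le> lam * (real n * z k') ^ p" using zk' by (intro mult_left_mono) auto
    then show ?thesis by (simp add: power_mult_distrib mult_ac)
  qed
  ultimately have "lam \<le> (R + \<epsilon>) * real n ^ p" by linarith
  then show ?thesis using clam zc zsum eq unfolding R_def by blast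
qed



lemma eigen_exist:
  assumes p: "p \<ge> 1" and npos: "n > 0"
    and Bnn: "\<And>i. i < n \<Longrightarrow> \<forall>is\<in>idxs p n. 0 \<le> B (i # is)"
    and rows: "\<And>i. i < n \<Longrightarrow> c \<le> (\<Sum>is\<in>idxs p n. B (i # is))"
    and c0: "0 \<le> c"
  shows "\<exists>lam y. c \<le> lam \<and> (\<forall>i<n. 0 \<le> y i) \<and> (\<Sum>i<n. y i) = 1 \<and> (\<forall>i<n. T p n B y i = lam * y i ^ p)"
proof -
  define R where "R = (\<Sum>i<n. \<Sum>is\<in>idxs p n. B (i # is))"
  have R0: "0 \<le> R" unfolding R_def using Bnn by (intro sum_nonneg) auto
  define U where "U = (R + 1) * real n ^ p"
  have "\<forall>k. \<exists>lam z. c \<le> lam \<and> lam \<le> (R + 1 / (real k + 1)) * real n ^ p \<and>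
     z \<in> cube n \<and> (\<Sum>i<n. z i) = 1 \<and> (\<forall>i<n. T p n B z i + 1 / (real k + 1) = lam * z i ^ p)"
  proof
    fix k
    have "(1::real) / (real k + 1) > 0" by simp
    from eigen_pert[OF p npos Bnn rows this] show "\<exists>lam z. c \<le> lam \<and> lam \<le> (R + 1 / (real k + 1)) * real n ^ p \<and>
     z \<in> cube n \<and> (\<Sum>i<n. z i) = 1 \<and> (\<forall>i<n. T p n B z i + 1 / (real k + 1) = lam * z i ^ p)"
      unfolding R_def by blast
  qed
  then obtain L Z where LZ: "\<And>k. c \<le> L k" "\<And>k. L k \<le> (R + 1 / (real k + 1)) * real n ^ p"
    "\<And>k. Z k \<in> cube n" "\<And>k. (\<Sum>i<n. Z k i) = 1"
    "\<And>k i. i < n \<Longrightarrow> T p n B (Z k) i + 1 / (real k + 1) = L k * Z k i ^ p"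
    by metis
  have LU: "L k \<le> U" for k
  proof -
    have "1 / (real k + 1) \<le> (1::real)" by (simp add: divide_le_eq_1)
    then have "(R + 1 / (real k + 1)) * real n ^ p \<le> U" unfolding U_def
      by (intro mult_right_mono) auto
    then show ?thesis using LZ(2)[of k] by linarith
  qed
  define X where "X k = (\<lambda>i. if i < n then Z k i else L k)" for k
  have Xb: "\<bar>X k i\<bar> \<le> max 1 U" if "i < Suc n" for k i
    using LZ(3)[of k] LU[of k] LZ(1)[of k] c0 by (auto simp: X_def cube_def)
  obtain r x where r: "strict_mono r" "\<forall>i<Suc n. (\<lambda>k. X (r k) i) \<longlonglongrightarrow> x i"
    using bw_nat[of "Suc n" X "max 1 U", OF Xb] by blast
  have zl: "\<forall>i<n. (\<lambda>k. Z (r k) i) \<longlonglongrightarrow> x i"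
  proof (intro allI impI)
    fix i assume i: "i < n"
    then have "i < Suc n" by simp
    from r(2)[rule_format, OF this] show "(\<lambda>k. Z (r k) i) \<longlonglongrightarrow> x i" using i by (simp add: X_def)
  qed
  have Ll: "(\<lambda>k. L (r k)) \<longlonglongrightarrow> x n" using r(2)[rule_format, of n] by (simp add: X_def)
  have xc: "x \<in> cube n" using cube_limit[of "\<lambda>k. Z (r k)" n x] LZ(3) zl by blast
  have z0: "(\<lambda>k. 1 / (real (r k) + 1)) \<longlonglongrightarrow> 0"
  proof -
    have "(\<lambda>k. 1 / (real k + 1)) \<longlonglongrightarrow> (0::real)" by (rule LIMSEQ_inverse_real_of_nat_add[where r=0, simplified, unfolded inverse_eq_divide add.commute[of 1]])
    then show ?thesis using LIMSEQ_subseq_LIMSEQ[OF _ r(1)] by (simp add: o_def)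
  qed
  have eq: "T p n B x i = x n * x i ^ p" if i: "i < n" for i
  proof -
    have l1: "(\<lambda>k. T p n B (Z (r k)) i + 1 / (real (r k) + 1)) \<longlonglongrightarrow> T p n B x i + 0"
      by (intro tendsto_add T_tendsto zl z0)
    have l2: "(\<lambda>k. L (r k) * Z (r k) i ^ p) \<longlonglongrightarrow> x n * x i ^ p"
      using zl i Ll by (intro tendsto_intros) auto
    have "(\<lambda>k. T p n B (Z (r k)) i + 1 / (real (r k) + 1)) = (\<lambda>k. L (r k) * Z (r k) i ^ p)"
      using LZ(5)[OF i] by simp
    with l1 l2 show ?thesis using LIMSEQ_unique by fastforce
  qed
  have "(\<lambda>k. \<Sum>i<n. Z (r k) i) \<longlonglongrightarrow> (\<Sum>i<n. x i)" using zl by (intro tendsto_sum) auto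
  then have xs: "(\<Sum>i<n. x i) = 1" using LZ(4) LIMSEQ_unique by (simp add: LIMSEQ_const_iff)
  have "c \<le> x n" using Ll LZ(1) by (intro LIMSEQ_le_const[OF Ll]) auto
  then show ?thesis using xc xs eq by (auto simp: cube_def)
qed



lemma rsum_A:
  assumes "m = Suc p" "\<forall>xs\<in>idxs m n. A xs \<ge> 0" "i < n"
  shows "rsum m n A i = (\<Sum>is\<in>idxs p n. A (i # is))"
proof -
  have "A (i # is) \<ge> 0" if "is \<in> idxs p n" for "is"
    using assms that by (auto simp: idxs_def)
  then show ?thesis unfolding rsum_def using assms(1) by (intro sum.cong refl) auto
qed

lemma rsum_sq:
  assumes m: "m = Suc p" and nn: "\<forall>xs\<in>idxs m n. A xs \<ge> 0" and i: "i < n"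
  shows "rsum ((m - 1) * (m - 1) + 1) n (tprod m m n A A) i
       = (\<Sum>is\<in>idxs p n. A (i # is) * (\<Prod>j<p. rsum m n A (is ! j)))"
proof -
  have Anz: "A (a # is) \<ge> 0" if "a < n" "is \<in> idxs p n" for a "is"
    using nn that m by (auto simp: idxs_def)
  have blk: "take p (drop (j * p) js) \<in> idxs p n" if "js \<in> idxs (p * p) n" "j < p" for js j
  proof -
    have "j * p + p \<le> p * p" using that(2)
      by (metis add.commute mult.commute mult_Suc_right mult_le_mono2 Suc_leI)
    then show ?thesis using that(1) by (auto simp: idxs_def dest: in_set_takeD in_set_dropD)
  qed
  have tp: "tprod m m n A A (i # js) = (\<Sum>is\<in>idxs p n. A (i # is) * (\<Prod>j<p. A ((is ! j) # take p (drop (j * p) js))))" for js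
    unfolding tprod_def using m by simp
  have tpnn: "0 \<le> tprod m m n A A (i # js)" if "js \<in> idxs (p * p) n" for js
    unfolding tp using i that
    by (intro sum_nonneg mult_nonneg_nonneg prod_nonneg Anz blk) (auto dest: idxs_nth)
  have "rsum ((m - 1) * (m - 1) + 1) n (tprod m m n A A) i = (\<Sum>js\<in>idxs (p * p) n. tprod m m n A A (i # js))"
    unfolding rsum_def using m tpnn by (intro sum.cong) auto
  also have "\<dots> = (\<Sum>is\<in>idxs p n. A (i # is) * (\<Sum>js\<in>idxs (p * p) n. \<Prod>j<p. A ((is ! j) # take p (drop (j * p) js))))"
    unfolding tp by (simp add: sum_distrib_left sum.swap[of _ "idxs p n"])
  also have "\<dots> = (\<Sum>is\<in>idxs p n. A (i # is) * (\<Prod>j<p. rsum m n A (is ! j)))"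
  proof (intro sum.cong refl arg_cong2[where f="(*)"])
    fix "is" assume is_: "is \<in> idxs p n"
    have "(\<Sum>js\<in>idxs (p * p) n. \<Prod>j<p. (\<lambda>j a. A ((is ! j) # a)) j (take p (drop (j * p) js)))
       = (\<Prod>j<p. \<Sum>a\<in>idxs p n. A ((is ! j) # a))" by (rule sum_prod_blocks)
    also have "\<dots> = (\<Prod>j<p. rsum m n A (is ! j))"
      using is_ by (intro prod.cong refl rsum_A[symmetric, OF m nn]) (auto dest: idxs_nth)
    finally show "(\<Sum>js\<in>idxs (p * p) n. \<Prod>j<p. A ((is ! j) # take p (drop (j * p) js))) = (\<Prod>j<p. rsum m n A (is ! j))"
      by simp
  qed
  finally show ?thesis .
qed



lemma eig_upper:
  assumes m: "m = Suc p" and nn: "\<forall>xs\<in>idxs m n. A xs \<ge> 0"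
    and rpos: "\<And>i. i < n \<Longrightarrow> rsum m n A i > 0"
    and ev: "tensor_eigenvalue m n A lam"
  shows "\<exists>k<n. cmod lam \<le> (\<Sum>is\<in>idxs p n. A (k # is) * (\<Prod>j<p. rsum m n A (is ! j))) / rsum m n A k ^ p"
proof -
  define r where "r = rsum m n A"
  obtain x where nz: "\<exists>i<n. x i \<noteq> 0" and
    eqn: "\<And>i. i < n \<Longrightarrow> (\<Sum>is\<in>idxs p n. complex_of_real (A (i # is)) * (\<Prod>j<p. x (is ! j))) = lam * x i ^ p"
    using ev m unfolding tensor_eigenvalue_def by auto
  obtain i0 where i0: "i0 < n" "x i0 \<noteq> 0" using nz by blast
  have npos: "n > 0" using i0 by simp
  define zz where "zz i = cmod (x i) / r i" for i
  obtain k where k: "k < n" "\<And>i. i < n \<Longrightarrow> zz i \<le> zz k" using ex_max_idx[OF npos, of zz] by blast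
  have rk: "r k > 0" using rpos k(1) by (simp add: r_def)
  have "zz i0 > 0" using i0 rpos by (simp add: zz_def r_def)
  then have zk: "zz k > 0" using k(2)[OF i0(1)] by simp
  have Anz: "A (a # is) \<ge> 0" if "a < n" "is \<in> idxs p n" for a "is"
    using nn that m by (auto simp: idxs_def)
  have xr: "cmod (x i) = r i * zz i" if "i < n" for i using rpos[OF that] by (simp add: zz_def r_def)
  have "cmod lam * (r k * zz k) ^ p = cmod (lam * x k ^ p)" using xr[OF k(1)] by (simp add: norm_mult norm_power)
  also have "\<dots> = cmod (\<Sum>is\<in>idxs p n. complex_of_real (A (k # is)) * (\<Prod>j<p. x (is ! j)))" using eqn[OF k(1)] by simp
  also have "\<dots> \<le> (\<Sum>is\<in>idxs p n. A (k # is) * (\<Prod>j<p. cmod (x (is ! j))))"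
    by (rule order_trans[OF norm_sum]) (simp add: norm_mult prod_norm[symmetric] Anz k(1) abs_of_nonneg)
  also have "\<dots> \<le> (\<Sum>is\<in>idxs p n. A (k # is) * ((\<Prod>j<p. r (is ! j)) * zz k ^ p))"
  proof (intro sum_mono mult_left_mono)
    fix "is" assume is_: "is \<in> idxs p n"
    show "0 \<le> A (k # is)" using Anz k(1) is_ by blast
    have "(\<Prod>j<p. cmod (x (is ! j))) \<le> (\<Prod>j<p. r (is ! j) * zz k)"
    proof (intro prod_mono conjI)
      fix j assume "j \<in> {..<p}"
      then have ij: "is ! j < n" using is_ idxs_nth by blast
      show "0 \<le> cmod (x (is ! j))" by simp
      show "cmod (x (is ! j)) \<le> r (is ! j) * zz k"
        using xr[OF ij] k(2)[OF ij] rpos[OF ij] by (simp add: r_def mult_left_mono)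
    qed
    then show "(\<Prod>j<p. cmod (x (is ! j))) \<le> (\<Prod>j<p. r (is ! j)) * zz k ^ p"
      by (simp add: prod.distrib)
  qed
  also have "\<dots> = zz k ^ p * (\<Sum>is\<in>idxs p n. A (k # is) * (\<Prod>j<p. r (is ! j)))"
    by (simp add: sum_distrib_left mult_ac)
  finally have "zz k ^ p * (cmod lam * r k ^ p) \<le> zz k ^ p * (\<Sum>is\<in>idxs p n. A (k # is) * (\<Prod>j<p. r (is ! j)))"
    by (simp add: power_mult_distrib mult_ac)
  then have "cmod lam * r k ^ p \<le> (\<Sum>is\<in>idxs p n. A (k # is) * (\<Prod>j<p. r (is ! j)))"
    using zk by (simp add: mult_le_cancel_left_pos)
  then have "cmod lam \<le> (\<Sum>is\<in>idxs p n. A (k # is) * (\<Prod>j<p. r (is ! j))) / r k ^ p"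
    using rk by (simp add: pos_le_divide_eq)
  then show ?thesis using k(1) by (auto simp: r_def)
qed



theorem theorem3p2:
  fixes m n :: nat and A :: "nat list \<Rightarrow> real"
  assumes "m \<ge> 2" and "n \<ge> 1"
    and "\<forall>xs\<in>idxs m n. A xs \<ge> 0"
    and "\<forall>i<n. rsum m n A i \<noteq> 0"
  shows "Min ((\<lambda>i. rsum ((m - 1) * (m - 1) + 1) n (tprod m m n A A) i / (rsum m n A i) ^ (m - 1)) ` {..<n})
           \<le> spectral_radius m n A
       \<and> spectral_radius m n A
           \<le> Max ((\<lambda>i. rsum ((m - 1) * (m - 1) + 1) n (tprod m m n A A) i / (rsum m n A i) ^ (m - 1)) ` {..<n})"
proof -
  define p where "p = m - 1"
  have m: "m = Suc p" and p1: "p \<ge> 1" using assms(1) by (auto simp: p_def)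
  have npos: "n > 0" using assms(2) by simp
  note nn = assms(3)
  define r where "r = rsum m n A"
  have rpos: "r i > 0" if "i < n" for i
  proof -
    have "r i \<ge> 0" unfolding r_def rsum_def by (simp add: sum_nonneg)
    then show ?thesis using assms(4) that by (auto simp: r_def)
  qed
  define Q where "Q = (\<lambda>i. rsum ((m - 1) * (m - 1) + 1) n (tprod m m n A A) i / (rsum m n A i) ^ (m - 1))"
  have Anz: "A (a # is) \<ge> 0" if "a < n" "is \<in> idxs p n" for a "is"
    using nn that m by (auto simp: idxs_def)
  have Qeq: "Q i = (\<Sum>is\<in>idxs p n. A (i # is) * (\<Prod>j<p. r (is ! j))) / r i ^ p" if "i < n" for i
    unfolding Q_def using rsum_sq[OF m nn that] by (simp add: p_def r_def)
  have Qnn: "Q i \<ge> 0" if "i < n" for i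
    unfolding Qeq[OF that] using rpos that
    by (intro divide_nonneg_nonneg sum_nonneg mult_nonneg_nonneg prod_nonneg Anz)
      (auto dest: idxs_nth intro: less_imp_le)
  define E where "E = {lam. tensor_eigenvalue m n A lam}"
  have fin: "finite (Q ` {..<n})" "Q ` {..<n} \<noteq> {}" using npos by auto
  have bound: "cmod lam \<le> Max (Q ` {..<n})" if lamE: "lam \<in> E" for lam
  proof -
    obtain k where k: "k < n" "cmod lam \<le> (\<Sum>is\<in>idxs p n. A (k # is) * (\<Prod>j<p. rsum m n A (is ! j))) / rsum m n A k ^ p"
      using eig_upper[OF m nn _, of lam] lamE assms(4) rpos by (auto simp: E_def r_def)
    then have "cmod lam \<le> Q k" using Qeq[OF k(1)] by (simp add: r_def)
    also have "\<dots> \<le> Max (Q ` {..<n})" using k(1) fin by (intro Max_ge) auto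
    finally show ?thesis .
  qed
  define c where "c = Min (Q ` {..<n})"
  have c0: "0 \<le> c" unfolding c_def using fin Qnn by (subst Min_ge_iff) auto
  define B where "B xs = A xs * (\<Prod>j<p. r (tl xs ! j)) / r (hd xs) ^ p" for xs
  have Bnn: "\<forall>is\<in>idxs p n. 0 \<le> B (i # is)" if "i < n" for i
  proof
    fix "is" assume is_: "is \<in> idxs p n"
    have "0 \<le> (\<Prod>j<p. r (is ! j))" using is_ rpos
      by (intro prod_nonneg) (auto dest: idxs_nth intro: less_imp_le)
    then show "0 \<le> B (i # is)" unfolding B_def using Anz[OF that is_] rpos[OF that] by simp
  qed
  have rows: "c \<le> (\<Sum>is\<in>idxs p n. B (i # is))" if "i < n" for i
  proof -
    have "(\<Sum>is\<in>idxs p n. B (i # is)) = Q i"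
      unfolding Qeq[OF that] B_def by (simp add: sum_divide_distrib)
    moreover have "c \<le> Q i" unfolding c_def using fin that by (intro Min_le) auto
    ultimately show ?thesis by simp
  qed
  obtain lam0 y where ly: "c \<le> lam0" "\<forall>i<n. 0 \<le> y i" "(\<Sum>i<n. y i) = 1"
    "\<forall>i<n. T p n B y i = lam0 * y i ^ p"
    using eigen_exist[OF p1 npos Bnn rows c0] by blast
  define x where "x i = complex_of_real (r i * y i)" for i
  have ev: "complex_of_real lam0 \<in> E"
    unfolding E_def tensor_eigenvalue_def mem_Collect_eq
  proof (intro exI[of _ x] conjI)
    show "\<exists>i<n. x i \<noteq> 0"
    proof (rule ccontr)
      assume "\<not> ?thesis"
      then have "\<forall>i<n. y i = 0" using rpos by (auto simp: x_def) (metis less_irrefl)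
      then show False using ly(3) by simp
    qed
    show "\<forall>i<n. (\<Sum>is\<in>idxs (m - 1) n. complex_of_real (A (i # is)) * (\<Prod>j<m - 1. x (is ! j))) =
        complex_of_real lam0 * x i ^ (m - 1)"
    proof (intro allI impI)
      fix i assume i: "i < n"
      have "(\<Sum>is\<in>idxs p n. A (i # is) * (\<Prod>j<p. r (is ! j) * y (is ! j))) = r i ^ p * T p n B y i"
        unfolding T_def B_def using rpos[OF i]
        by (simp add: sum_distrib_left prod.distrib mult_ac)
      also have "\<dots> = lam0 * (r i * y i) ^ p" using ly(4) i by (simp add: power_mult_distrib mult_ac)
      finally have "complex_of_real (\<Sum>is\<in>idxs p n. A (i # is) * (\<Prod>j<p. r (is ! j) * y (is ! j)))
          = complex_of_real (lam0 * (r i * y i) ^ p)" by simp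
      then show "(\<Sum>is\<in>idxs (m - 1) n. complex_of_real (A (i # is)) * (\<Prod>j<m - 1. x (is ! j))) =
        complex_of_real lam0 * x i ^ (m - 1)"
        by (simp add: x_def p_def)
    qed
  qed
  have bdd: "bdd_above (cmod ` E)" unfolding bdd_above_def using bound by blast
  have lam0nn: "0 \<le> lam0" using c0 ly(1) by simp
  have "c \<le> cmod (complex_of_real lam0)" using ly(1) lam0nn by simp
  also have "\<dots> \<le> Sup (cmod ` E)" using ev bdd by (intro cSup_upper imageI)
  finally have lower: "c \<le> spectral_radius m n A" by (simp add: spectral_radius_def E_def)
  have "Sup (cmod ` E) \<le> Max (Q ` {..<n})" using ev bound by (intro cSup_least) auto
  then have upper: "spectral_radius m n A \<le> Max (Q ` {..<n})" by (simp add: spectral_radius_def E_def)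
  show ?thesis using lower upper unfolding c_def Q_def by blast
qed


end
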